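(* Let $a(s)=s^n+a_1s^{n-1}+\cdots+a_n$ and $b(s)=s^n+b_1s^{n-1}+\cdots+b_n$ be real Hurwitz stable polynomials of degree $n$, and let $c(s)=s^{n-1}+x_1s^{n-2}+\cdots+x_{n-1}$ be a real polynomial such that $\mathrm{Re}\left[\frac{c(j\omega)}{a(j\omega)}\right]>0$ and $\mathrm{Re}\left[\frac{c(j\omega)}{b(j\omega)}\right]>0$ for all $\omega\in\mathbb{R}$. Let $h(s)$ be any monic real polynomial of degree $n$ and set $\tilde c(s):=c(s)+\delta h(s)$. Then there exists $\delta_0>0$ such that for every $\delta\in(0,\delta_0)$ both $\tilde c(s)/a(s)$ and $\tilde c(s)/b(s)$ are strictly positive real.
   Context: A real polynomial is Hurwitz stable if all its roots lie in the open left half-plane. A rational function $f(s)=p(s)/q(s)$ with $p,q$ real polynomials is strictly positive real if (i) $\deg p=\deg q$; (ii) $q$ is Hurwitz stable; (iii) $\mathrm{Re}[f(j\omega)]>0$ for all $\omega\in\mathbb{R}$. *)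

theory Defs
  imports "HOL-Analysis.Analysis" "HOL-Computational_Algebra.Polynomial"
begin

definition hurwitz_stable :: "real poly \<Rightarrow> bool" where
  "hurwitz_stable q \<longleftrightarrow> q \<noteq> 0 \<and>
     (\<forall>z::complex. poly (map_poly complex_of_real q) z = 0 \<longrightarrow> Re z < 0)"

definition strictly_positive_real :: "real poly \<Rightarrow> real poly \<Rightarrow> bool" where
  "strictly_positive_real p q \<longleftrightarrow>
     degree p = degree q \<and> hurwitz_stable q \<and>
     (\<forall>\<omega>::real. Re (poly (map_poly complex_of_real p) (\<i> * complex_of_real \<omega>) /
                     poly (map_poly complex_of_real q) (\<i> * complex_of_real \<omega>)) > 0)"

end

theory Submission
  imports Defs
begin

lemma mp_add: "map_poly complex_of_real (p + q) = map_poly complex_of_real p + map_poly complex_of_real q"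
  by (rule poly_eqI) (simp add: coeff_map_poly)

lemma mp_diff: "map_poly complex_of_real (p - q) = map_poly complex_of_real p - map_poly complex_of_real q"
  by (rule poly_eqI) (simp add: coeff_map_poly)

lemma mp_smult: "map_poly complex_of_real (smult d p) = smult (complex_of_real d) (map_poly complex_of_real p)"
  by (rule poly_eqI) (simp add: coeff_map_poly)

lemma aux:
  fixes a c h :: "real poly" and n :: nat
  assumes n: "n \<ge> 1"
    and da: "degree a = n" and la: "lead_coeff a = 1" and st: "hurwitz_stable a"
    and dh: "degree h = n" and lh: "lead_coeff h = 1"
    and pos: "\<forall>\<omega>::real. Re (poly (map_poly complex_of_real c) (\<i> * complex_of_real \<omega>) /
                       poly (map_poly complex_of_real a) (\<i> * complex_of_real \<omega>)) > 0"
  shows "\<exists>\<delta>0>0. \<forall>\<delta>. 0 < \<delta> \<and> \<delta> < \<delta>0 \<longrightarrow> (\<forall>\<omega>::real.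
     Re (poly (map_poly complex_of_real c) (\<i> * complex_of_real \<omega>) /
                       poly (map_poly complex_of_real a) (\<i> * complex_of_real \<omega>))
   + \<delta> * Re (poly (map_poly complex_of_real h) (\<i> * complex_of_real \<omega>) /
                       poly (map_poly complex_of_real a) (\<i> * complex_of_real \<omega>)) > 0)"
proof -
  define A where "A = map_poly complex_of_real a"
  define C where "C = map_poly complex_of_real c"
  define H where "H = map_poly complex_of_real h"
  define R where "R = h - a"
  define RC where "RC = map_poly complex_of_real R"
  have nz: "poly A (\<i> * complex_of_real w) \<noteq> 0" for w
    using st unfolding hurwitz_stable_def A_def by fastforce
  have dA: "degree A = n" unfolding A_def using da by (simp add: degree_map_poly)
  have dR: "degree R < n"
  proof (cases "R = 0")
    case True then show ?thesis using n by simp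
  next
    case False
    have le: "degree R \<le> n" unfolding R_def using da dh
      by (metis degree_diff_le le_refl)
    have "coeff R n = 0" unfolding R_def using da dh la lh by simp
    then have "degree R \<noteq> n" using False by auto
    then show ?thesis using le by simp
  qed
  have dRC: "degree RC < degree A" unfolding RC_def using dR dA by (simp add: degree_map_poly)
  have HA: "poly H z = poly A z + poly RC z" for z
    unfolding H_def A_def RC_def R_def mp_diff by simp
  have lim: "((\<lambda>z. poly RC z / poly A z) \<longlongrightarrow> 0) at_infinity"
    by (rule poly_divide_tendsto_0_at_infinity[OF dRC])
  then have "\<forall>\<^sub>F z in at_infinity. dist (poly RC z / poly A z) 0 < 1/2"
    using tendsto_iff[THEN iffD1, OF lim, rule_format, of "1/2"] by simp
  then obtain W where W: "\<And>z. W \<le> norm z \<Longrightarrow> norm (poly RC z / poly A z) < 1/2"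
    unfolding eventually_at_infinity by auto
  define g where "g = (\<lambda>w::real. Re (poly C (\<i> * complex_of_real w) / poly A (\<i> * complex_of_real w)))"
  define k where "k = (\<lambda>w::real. Re (poly H (\<i> * complex_of_real w) / poly A (\<i> * complex_of_real w)))"
  have far: "k w > 1/2" if "\<bar>w\<bar> \<ge> W" for w
  proof -
    let ?z = "\<i> * complex_of_real w"
    have "norm ?z = \<bar>w\<bar>" by (simp add: norm_mult)
    then have nr: "norm (poly RC ?z / poly A ?z) < 1/2" using W that by simp
    have "k w = 1 + Re (poly RC ?z / poly A ?z)"
      unfolding k_def HA using nz[of w] by (simp add: add_divide_distrib)
    moreover have "Re (poly RC ?z / poly A ?z) \<ge> - norm (poly RC ?z / poly A ?z)"
      using abs_Re_le_cmod[of "poly RC ?z / poly A ?z"] by linarith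
    ultimately show ?thesis using nr by linarith
  qed
  define K where "K = {-\<bar>W\<bar>..\<bar>W\<bar>}"
  have cK: "compact K" "K \<noteq> {}" unfolding K_def by auto
  have cg: "continuous_on K g" unfolding g_def using nz
    by (intro continuous_intros) auto
  have ck: "continuous_on K (\<lambda>w. \<bar>k w\<bar>)" unfolding k_def using nz
    by (intro continuous_intros) auto
  obtain x0 where x0: "x0 \<in> K" "\<And>y. y \<in> K \<Longrightarrow> g x0 \<le> g y"
    using continuous_attains_inf[OF cK cg] by auto
  obtain x1 where x1: "x1 \<in> K" "\<And>y. y \<in> K \<Longrightarrow> \<bar>k y\<bar> \<le> \<bar>k x1\<bar>"
    using continuous_attains_sup[OF cK ck] by auto
  define m where "m = g x0"
  define M where "M = \<bar>k x1\<bar>"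
  have mpos: "m > 0" unfolding m_def g_def C_def A_def using pos by simp
  have Mnn: "M \<ge> 0" unfolding M_def by simp
  have gpos: "g w > 0" for w unfolding g_def C_def A_def using pos by simp
  show ?thesis
  proof (intro exI[of _ "m / (M + 1)"] conjI allI impI)
    show "m / (M + 1) > 0" using mpos Mnn by simp
    fix \<delta> w :: real
    assume d: "0 < \<delta> \<and> \<delta> < m / (M + 1)"
    have "g w + \<delta> * k w > 0"
    proof (cases "w \<in> K")
      case True
      have gm: "g w \<ge> m" using x0(2)[OF True] unfolding m_def .
      have kM: "\<bar>k w\<bar> \<le> M" using x1(2)[OF True] unfolding M_def .
      have "\<delta> * (M + 1) < m" using d Mnn by (simp add: pos_less_divide_eq)
      then have "\<delta> * M < m" using d by (simp add: algebra_simps)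
      moreover have "\<delta> * k w \<ge> - (\<delta> * M)"
      proof -
        have "\<delta> * \<bar>k w\<bar> \<le> \<delta> * M" using kM d by (simp add: mult_left_mono)
        moreover have "\<delta> * k w \<ge> - (\<delta> * \<bar>k w\<bar>)" using d
          by (metis abs_ge_minus_self abs_mult abs_of_pos minus_le_iff)
        ultimately show ?thesis by linarith
      qed
      ultimately show ?thesis using gm by linarith
    next
      case False
      then have "\<bar>w\<bar> \<ge> W" unfolding K_def by auto
      then have "k w > 1/2" by (rule far)
      moreover have "\<delta> * k w > 0" using d \<open>k w > 1/2\<close> by simp
      ultimately show ?thesis using gpos[of w] by linarith
    qed
    then show "Re (poly (map_poly complex_of_real c) (\<i> * complex_of_real w) /
                       poly (map_poly complex_of_real a) (\<i> * complex_of_real w))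
   + \<delta> * Re (poly (map_poly complex_of_real h) (\<i> * complex_of_real w) /
                       poly (map_poly complex_of_real a) (\<i> * complex_of_real w)) > 0"
      unfolding g_def k_def C_def A_def H_def .
  qed
qed

theorem lemma4:
  fixes a b c h :: "real poly" and n :: nat
  assumes "n \<ge> 1"
    and "degree a = n" "lead_coeff a = 1" "hurwitz_stable a"
    and "degree b = n" "lead_coeff b = 1" "hurwitz_stable b"
    and "degree c = n - 1" "lead_coeff c = 1"
    and "\<forall>\<omega>::real. Re (poly (map_poly complex_of_real c) (\<i> * complex_of_real \<omega>) /
                       poly (map_poly complex_of_real a) (\<i> * complex_of_real \<omega>)) > 0"
    and "\<forall>\<omega>::real. Re (poly (map_poly complex_of_real c) (\<i> * complex_of_real \<omega>) /
                       poly (map_poly complex_of_real b) (\<i> * complex_of_real \<omega>)) > 0"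
    and "degree h = n" "lead_coeff h = 1"
  shows "\<exists>\<delta>0>0. \<forall>\<delta>. 0 < \<delta> \<and> \<delta> < \<delta>0 \<longrightarrow>
           strictly_positive_real (c + smult \<delta> h) a \<and>
           strictly_positive_real (c + smult \<delta> h) b"
proof -
  obtain d1 where d1: "d1 > 0" "\<forall>\<delta>. 0 < \<delta> \<and> \<delta> < d1 \<longrightarrow> (\<forall>\<omega>::real.
     Re (poly (map_poly complex_of_real c) (\<i> * complex_of_real \<omega>) /
                       poly (map_poly complex_of_real a) (\<i> * complex_of_real \<omega>))
   + \<delta> * Re (poly (map_poly complex_of_real h) (\<i> * complex_of_real \<omega>) /
                       poly (map_poly complex_of_real a) (\<i> * complex_of_real \<omega>)) > 0)"
    using aux[of n a h c] assms by blast
  obtain d2 where d2: "d2 > 0" "\<forall>\<delta>. 0 < \<delta> \<and> \<delta> < d2 \<longrightarrow> (\<forall>\<omega>::real.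
     Re (poly (map_poly complex_of_real c) (\<i> * complex_of_real \<omega>) /
                       poly (map_poly complex_of_real b) (\<i> * complex_of_real \<omega>))
   + \<delta> * Re (poly (map_poly complex_of_real h) (\<i> * complex_of_real \<omega>) /
                       poly (map_poly complex_of_real b) (\<i> * complex_of_real \<omega>)) > 0)"
    using aux[of n b h c] assms by blast
  have key: "Re (poly (map_poly complex_of_real (c + smult \<delta> h)) z / q) =
     Re (poly (map_poly complex_of_real c) z / q) + \<delta> * Re (poly (map_poly complex_of_real h) z / q)"
    for \<delta> z q
  proof -
    have e1: "complex_of_real \<delta> * poly (map_poly complex_of_real h) z / q =
       complex_of_real \<delta> * (poly (map_poly complex_of_real h) z / q)" (is "_ = ?r") by simp
    have e2: "Re ?r = \<delta> * Re (poly (map_poly complex_of_real h) z / q)"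
      by (simp only: times_complex.sel Re_complex_of_real Im_complex_of_real mult_zero_left diff_zero)
    show ?thesis unfolding mp_add mp_smult poly_add poly_smult add_divide_distrib plus_complex.sel
      e1 e2 by (rule refl)
  qed
  have deg: "degree (c + smult \<delta> h) = n" if "\<delta> > 0" for \<delta>
  proof -
    have "degree (smult \<delta> h) = n" using that assms by simp
    moreover have "degree c < n" using assms by simp
    ultimately show ?thesis by (simp add: degree_add_eq_right)
  qed
  show ?thesis
  proof (intro exI[of _ "min d1 d2"] conjI allI impI)
    show "min d1 d2 > 0" using d1 d2 by simp
    fix \<delta> :: real assume d: "0 < \<delta> \<and> \<delta> < min d1 d2"
    show "strictly_positive_real (c + smult \<delta> h) a"
      unfolding strictly_positive_real_def key using d d1 deg[of \<delta>] assms by auto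
    show "strictly_positive_real (c + smult \<delta> h) b"
      unfolding strictly_positive_real_def key using d d2 deg[of \<delta>] assms by auto
  qed
qed

end
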